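(* Consider the AIRPF algorithm described in the context, with $S_m\in\mathbb{N}_0$, $m=2^{S_m}$, $M\in\mathbb{N}$, in which filters interact at every stage, i.e. $\alpha_s=A_s$ for every time and every $s\in\{1,\ldots,S_m\}$. For $n\in\mathbb{N}$ and $s\in\{0,\ldots,S_m\}$ let $\mathcal{G}_{n,s}$ denote the $\sigma$-algebra generated by all particle blocks $\boldsymbol{\xi}^k_{p,t}$, $k\in\{1,\ldots,m\}$, with $(S_m+1)p+t\le(S_m+1)n+s$. Then for all $\psi\in\mathcal{B}(\mathbb{X}^{2M})$, $n\in\mathbb{N}$, $s\in\{1,\ldots,S_m-1\}$ and $i_{S_m+1},j_{S_m+1}\in\{1,\ldots,m\}$, $$\sum_{i_{S_m},j_{S_m}=1}^m\mathbb{E}\Big[A_{S_m}^{i_{S_m+1}i_{S_m}}A_{S_m}^{j_{S_m+1}j_{S_m}}W^{i_{S_m}}_{n,S_m}W^{j_{S_m}}_{n,S_m}\psi(\boldsymbol{\xi}^{i_{S_m}}_{n,S_m},\boldsymbol{\xi}^{j_{S_m}}_{n,S_m})\,\Big|\,\mathcal{G}_{n,s}\Big]$$ $$=\sum_{i_s,\ldots,i_{S_m}=1}^m\ \sum_{j_s,\ldots,j_{S_m}=1}^m\left[\prod_{q=s}^{S_m}A_q^{i_{q+1}i_q}A_q^{j_{q+1}j_q}\right]W^{i_s}_{n,s}W^{j_s}_{n,s}\,\mathcal{C}_{(i_{s+1},\ldots,i_{S_m}),(j_{s+1},\ldots,j_{S_m})}(\psi)(\boldsymbol{\xi}^{i_s}_{n,s},\boldsymbol{\xi}^{j_s}_{n,s})$$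 almost surely.
   Context: $(\mathbb{X},\mathcal{X})$ is a measurable space; $\mathcal{B}(\mathbb{X}^{2M})$ denotes bounded measurable real functions of two blocks $(\boldsymbol{\xi},\boldsymbol{\xi}')\in\mathbb{X}^M\times\mathbb{X}^M$. Model: probability measure $\pi_0$ on $\mathbb{X}$, Markov kernels $K_n$ ($n\ge1$), non-negative bounded measurable potentials $g_n$ ($n\ge0$). AIRPF: for $s\in\{1,\ldots,S_m\}$, $A_s=\mathbf{I}_{2^{S_m-s}}\otimes\tfrac12\mathbf{1}_2\otimes\mathbf{I}_{2^{s-1}}$ ($\otimes$ Kronecker product, $\mathbf{I}_\ell$ identity, $\mathbf{1}_2$ the $2\times2$ all-ones matrix), entries $A_s^{k\ell}$. For time $n\in\mathbb{N}_0$, stage $s\in\{0,\ldots,S_m\}$ and filter $k\in\{1,\ldots,m\}$ there is a block $\boldsymbol{\xi}^k_{n,s}=(\xi^{k,1}_{n,s},\ldots,\xi^{k,M}_{n,s})\in\mathbb{X}^M$ and a weight $W^k_{n,s}$: (i) $W^k_{0,0}=1$, $\boldsymbol{\xi}^k_{0,0}$ i.i.d. $\pi_0^{\otimes M}$; (ii) $W^k_{n,1}=W^k_{n,0}\frac1M\sum_ig_n(\xi^{k,i}_{n,0})$ and, conditionally independently over $k,i$, $\xi^{k,i}_{n,1}\sim\sum_jg_n(\xi^{k,j}_{n,0})\delta_{\xi^{k,j}_{n,0}}/\sum_jg_n(\xi^{k,j}_{n,0})$; (iii) for $s=1,\ldots,S_m$, with interaction matrix $\alpha_s$: $W^k_{n,s+1}=\sum_\ell\alpha_s^{k\ell}W^\ell_{n,s}$,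 conditionally independently over $k$ an index $L_k$ with $\mathbb{P}(L_k=\ell)=\alpha_s^{k\ell}W^\ell_{n,s}/W^k_{n,s+1}$ is drawn; if $s<S_m$, $\boldsymbol{\xi}^k_{n,s+1}=\boldsymbol{\xi}^{L_k}_{n,s}$; if $s=S_m$, $W^k_{n+1,0}=W^k_{n,S_m+1}$ and $\boldsymbol{\xi}^k_{n+1,0}\sim K_{n+1}^{\otimes M}(\boldsymbol{\xi}^{L_k}_{n,S_m},\cdot)$ (each particle moved independently by $K_{n+1}$). Collision operators: for $\psi$ on $E\times E$ (here $E=\mathbb{X}^M$), $\mathcal{C}_0(\psi)=\psi$, $\mathcal{C}_1(\psi)(x,x')=\psi(x,x)$; $\mathcal{C}_{(a_1,\ldots,a_p),(b_1,\ldots,b_p)}=\mathcal{C}_1$ if $a_k=b_k$ for some $k$, else $\mathcal{C}_0$. *)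

theory Defs
  imports "HOL-Probability.Probability"
begin

definition idm :: "nat \<Rightarrow> nat \<Rightarrow> real" where
  "idm i j = (if i = j then 1 else 0)"

text \<open>Kronecker product; d is the dimension of the (square) right factor B.\<close>
definition kron :: "nat \<Rightarrow> (nat \<Rightarrow> nat \<Rightarrow> real) \<Rightarrow> (nat \<Rightarrow> nat \<Rightarrow> real) \<Rightarrow> nat \<Rightarrow> nat \<Rightarrow> real" where
  "kron d A B i j = A (i div d) (j div d) * B (i mod d) (j mod d)"

definition half_ones :: "nat \<Rightarrow> nat \<Rightarrow> real" where
  "half_ones i j = 1 / 2"

text \<open>A_s = I_(2^(Sm-s)) (x) (1/2) 1_2 (x) I_(2^(s-1)), as a 0-based m x m matrix (m = 2^Sm);
  the size of the left identity factor only fixes the index range {0..<m}.\<close>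
definition Amat :: "nat \<Rightarrow> nat \<Rightarrow> nat \<Rightarrow> real" where
  "Amat s = kron (2 ^ (s - 1)) (kron 2 idm half_ones) idm"

text \<open>Entry A_s^{k l} with the paper's 1-based indices k, l in {1..m}.\<close>
definition A_entry :: "nat \<Rightarrow> nat \<Rightarrow> nat \<Rightarrow> real" where
  "A_entry s k l = Amat s (k - 1) (l - 1)"

definition C0 :: "('b \<Rightarrow> 'b \<Rightarrow> real) \<Rightarrow> 'b \<Rightarrow> 'b \<Rightarrow> real" where
  "C0 \<psi> = \<psi>"

definition C1 :: "('b \<Rightarrow> 'b \<Rightarrow> real) \<Rightarrow> 'b \<Rightarrow> 'b \<Rightarrow> real" where
  "C1 \<psi> x x' = \<psi> x x"

text \<open>C_{(a_1..a_p),(b_1..b_p)}; tuples are lists of equal length p.\<close>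
definition coll :: "nat list \<Rightarrow> nat list \<Rightarrow> ('b \<Rightarrow> 'b \<Rightarrow> real) \<Rightarrow> 'b \<Rightarrow> 'b \<Rightarrow> real" where
  "coll as bs = (if \<exists>k < length as. as ! k = bs ! k then C1 else C0)"

definition gens :: "'a measure \<Rightarrow> ('a \<Rightarrow> 'b) \<Rightarrow> 'b measure \<Rightarrow> 'a set set" where
  "gens M Y N = {Y -` B \<inter> space M | B. B \<in> sets N}"

definition cond_prob :: "'a measure \<Rightarrow> 'a measure \<Rightarrow> 'a set \<Rightarrow> 'a \<Rightarrow> real" where
  "cond_prob M F E = real_cond_exp M F (indicator E)"

definition cond_law :: "'a measure \<Rightarrow> 'a measure \<Rightarrow> ('a \<Rightarrow> 'b) \<Rightarrow> 'b measure \<Rightarrow> ('a \<Rightarrow> 'b measure) \<Rightarrow> bool" where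
  "cond_law M F Y N \<kappa> \<longleftrightarrow>
     (\<forall>B \<in> sets N. AE \<omega> in M. cond_prob M F (Y -` B \<inter> space M) \<omega> = measure (\<kappa> \<omega>) B)"

text \<open>Blocks live in X^Np = PiM {1..Np} X.  Pseudo-time of (p,t): tau = (Sm+1) p + t.\<close>
definition blockM :: "nat \<Rightarrow> 'x measure \<Rightarrow> (nat \<Rightarrow> 'x) measure" where
  "blockM Np X = PiM {1..Np} (\<lambda>_. X)"

definition G_alg :: "'a measure \<Rightarrow> 'x measure \<Rightarrow> nat \<Rightarrow> nat \<Rightarrow>
    (nat \<Rightarrow> nat \<Rightarrow> nat \<Rightarrow> 'a \<Rightarrow> nat \<Rightarrow> 'x) \<Rightarrow> nat \<Rightarrow> nat \<Rightarrow> 'a measure" where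
  "G_alg M X Sm Np \<xi> n s = sigma (space M)
     (\<Union>{gens M (\<xi> p t k) (blockM Np X) | p t k.
         t \<le> Sm \<and> k \<in> {1..2^Sm} \<and> (Sm+1)*p + t \<le> (Sm+1)*n + s})"

text \<open>Full history of the algorithm up to key c.  Keys: blocks xi_{p,t} and the stage-(ii)
  selection indices J_{p,.,.} (which produce xi_{p,1}) are revealed at 2 tau(p,t) resp. 2 tau(p,1);
  the stage-(iii) selection indices L_{p,t,.} are revealed at 2 tau(p,t) + 1.\<close>
definition H_alg :: "'a measure \<Rightarrow> 'x measure \<Rightarrow> nat \<Rightarrow> nat \<Rightarrow>
    (nat \<Rightarrow> nat \<Rightarrow> nat \<Rightarrow> 'a \<Rightarrow> nat \<Rightarrow> 'x) \<Rightarrow>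
    (nat \<Rightarrow> nat \<Rightarrow> nat \<Rightarrow> 'a \<Rightarrow> nat) \<Rightarrow> (nat \<Rightarrow> nat \<Rightarrow> nat \<Rightarrow> 'a \<Rightarrow> nat) \<Rightarrow> nat \<Rightarrow> 'a measure" where
  "H_alg M X Sm Np \<xi> J L c = sigma (space M)
     (\<Union>{gens M (\<xi> p t k) (blockM Np X) | p t k.
          t \<le> Sm \<and> k \<in> {1..2^Sm} \<and> 2*((Sm+1)*p + t) \<le> c}
      \<union> \<Union>{gens M (J p k i) (count_space UNIV) | p k i.
          k \<in> {1..2^Sm} \<and> i \<in> {1..Np} \<and> 2*((Sm+1)*p + 1) \<le> c}
      \<union> \<Union>{gens M (L p t k) (count_space UNIV) | p t k.
          t \<in> {1..Sm} \<and> k \<in> {1..2^Sm} \<and> 2*((Sm+1)*p + t) + 1 \<le> c})"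

text \<open>
  xi p t k \<omega> : block xi^k_{p,t} (a function on {1..Np}, extensional);
  W p t k \<omega> : weight W^k_{p,t};
  J p k i \<omega> : index j with xi^{k,i}_{p,1} = xi^{k,j}_{p,0} (step (ii));
  L p t k \<omega> : index L_k drawn at stage t of time p (step (iii)).
  Conditional selection laws are stated multiplied by their denominators, i.e.
  P(L_k = l_k, k \<in> S | past) * prod_{k\<in>S} W^k_{p,t+1} = prod_{k\<in>S} A^{k l_k} W^{l_k}_{p,t},
  which is the prescribed conditional joint law wherever it is defined (positive denominators).\<close>
definition airpf :: "'a measure \<Rightarrow> 'x measure \<Rightarrow> 'x measure \<Rightarrow> (nat \<Rightarrow> 'x \<Rightarrow> 'x measure) \<Rightarrow>
    (nat \<Rightarrow> 'x \<Rightarrow> real) \<Rightarrow> nat \<Rightarrow> nat \<Rightarrow>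
    (nat \<Rightarrow> nat \<Rightarrow> nat \<Rightarrow> 'a \<Rightarrow> nat \<Rightarrow> 'x) \<Rightarrow> (nat \<Rightarrow> nat \<Rightarrow> nat \<Rightarrow> 'a \<Rightarrow> real) \<Rightarrow>
    (nat \<Rightarrow> nat \<Rightarrow> nat \<Rightarrow> 'a \<Rightarrow> nat) \<Rightarrow> (nat \<Rightarrow> nat \<Rightarrow> nat \<Rightarrow> 'a \<Rightarrow> nat) \<Rightarrow> bool" where
  "airpf M X \<pi>0 K g Sm Np \<xi> W J L \<longleftrightarrow>
    (let m = 2^Sm; H = H_alg M X Sm Np \<xi> J L; \<tau> = (\<lambda>p t. (Sm+1)*p + t) in
     prob_space M \<and>
     \<comment> \<open>model\<close>
     prob_space \<pi>0 \<and> sets \<pi>0 = sets X \<and>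
     (\<forall>n\<ge>1. K n \<in> measurable X (prob_algebra X)) \<and>
     (\<forall>n. g n \<in> borel_measurable X \<and> (\<forall>x. 0 \<le> g n x) \<and> (\<exists>B. \<forall>x. g n x \<le> B)) \<and>
     \<comment> \<open>measurability of the random elements\<close>
     (\<forall>p t k. t \<le> Sm \<longrightarrow> k \<in> {1..m} \<longrightarrow> \<xi> p t k \<in> measurable M (blockM Np X)) \<and>
     (\<forall>p k i. J p k i \<in> measurable M (count_space UNIV) \<and> (\<forall>\<omega>. J p k i \<omega> \<in> {1..Np})) \<and>
     (\<forall>p t k. L p t k \<in> measurable M (count_space UNIV) \<and> (\<forall>\<omega>. L p t k \<omega> \<in> {1..m})) \<and>
     \<comment> \<open>(i)\<close>
     (\<forall>k \<in> {1..m}. W 0 0 k = (\<lambda>_. 1)) \<and>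
     prob_space.indep_vars M (\<lambda>_. X) (\<lambda>(k,i) \<omega>. \<xi> 0 0 k \<omega> i) ({1..m} \<times> {1..Np}) \<and>
     (\<forall>k \<in> {1..m}. \<forall>i \<in> {1..Np}. distr M X (\<lambda>\<omega>. \<xi> 0 0 k \<omega> i) = \<pi>0) \<and>
     \<comment> \<open>(ii)\<close>
     (\<forall>n. \<forall>k \<in> {1..m}. \<forall>\<omega>.
        W n 1 k \<omega> = W n 0 k \<omega> * ((1 / real Np) * (\<Sum>i=1..Np. g n (\<xi> n 0 k \<omega> i))) \<and>
        \<xi> n 1 k \<omega> = (\<lambda>i \<in> {1..Np}. \<xi> n 0 k \<omega> (J n k i \<omega>))) \<and>
     (\<forall>n S j. S \<subseteq> {1..m} \<times> {1..Np} \<longrightarrow> (\<forall>x \<in> S. j x \<in> {1..Np}) \<longrightarrow>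
        (AE \<omega> in M.
          cond_prob M (H (2 * \<tau> n 0)) {\<omega> \<in> space M. \<forall>(k,i) \<in> S. J n k i \<omega> = j (k,i)} \<omega>
            * (\<Prod>(k,i) \<in> S. (\<Sum>j'=1..Np. g n (\<xi> n 0 k \<omega> j')))
          = (\<Prod>(k,i) \<in> S. g n (\<xi> n 0 k \<omega> (j (k,i)))))) \<and>
     \<comment> \<open>(iii) with alpha_s = A_s\<close>
     (\<forall>n. \<forall>s \<in> {1..Sm}. \<forall>k \<in> {1..m}. \<forall>\<omega>.
        W n (s+1) k \<omega> = (\<Sum>l=1..m. A_entry s k l * W n s l \<omega>)) \<and>
     (\<forall>n. \<forall>s \<in> {1..Sm}. \<forall>S l. S \<subseteq> {1..m} \<longrightarrow> (\<forall>k \<in> S. l k \<in> {1..m}) \<longrightarrow>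
        (AE \<omega> in M.
          cond_prob M (H (2 * \<tau> n s)) {\<omega> \<in> space M. \<forall>k \<in> S. L n s k \<omega> = l k} \<omega>
            * (\<Prod>k \<in> S. W n (s+1) k \<omega>)
          = (\<Prod>k \<in> S. A_entry s k (l k) * W n s (l k) \<omega>))) \<and>
     (\<forall>n. \<forall>s. 1 \<le> s \<longrightarrow> s < Sm \<longrightarrow> (\<forall>k \<in> {1..m}. \<forall>\<omega>. \<xi> n (s+1) k \<omega> = \<xi> n s (L n s k \<omega>) \<omega>)) \<and>
     (\<forall>n. \<forall>k \<in> {1..m}. W (n+1) 0 k = W n (Sm+1) k) \<and>
     (\<forall>n. cond_law M (H (2 * \<tau> n Sm + 1))
            (\<lambda>\<omega>. \<lambda>k \<in> {1..m}. \<xi> (n+1) 0 k \<omega>)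
            (PiM {1..m} (\<lambda>_. blockM Np X))
            (\<lambda>\<omega>. PiM {1..m} (\<lambda>k. PiM {1..Np} (\<lambda>i. K (n+1) (\<xi> n Sm (L n Sm k \<omega>) \<omega> i))))))"

end

theory Submission
  imports Defs
begin

lemma subalg_sigma:
  assumes "A \<subseteq> sets M"
  shows "subalgebra M (sigma (space M) A)"
proof -
  have A: "A \<subseteq> Pow (space M)" using assms sets.sets_into_space by blast
  show ?thesis unfolding subalgebra_def
    using A assms by (simp add: sets.sigma_sets_subset)
qed

lemma subalg_sigma_mono:
  assumes "A \<subseteq> B" "B \<subseteq> Pow \<Omega>"
  shows "subalgebra (sigma \<Omega> B) (sigma \<Omega> A)"
  unfolding subalgebra_def using assms
  by (simp add: sigma_sets_mono')

lemma meas_sigma_gen: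
  assumes "Y \<in> measurable M N" "gens M Y N \<subseteq> A" "A \<subseteq> Pow (space M)"
  shows "Y \<in> measurable (sigma (space M) A) N"
proof (rule measurableI)
  fix x assume "x \<in> space (sigma (space M) A)"
  then show "Y x \<in> space N" using assms(1,3) measurable_space by auto
next
  fix B assume "B \<in> sets N"
  then have "Y -` B \<inter> space M \<in> A" using assms(2) unfolding gens_def by blast
  then show "Y -` B \<inter> space (sigma (space M) A) \<in> sets (sigma (space M) A)"
    using assms(3) by auto
qed

lemma Union_gens_mono: "(\<And>p t k. P p t k \<Longrightarrow> Q p t k) \<Longrightarrow>
   \<Union>{f p t k | p t k. P p t k} \<subseteq> \<Union>{f p t k | p t k. Q p t k}"
  by blast

lemma sets_Pow: "S \<subseteq> sets M \<Longrightarrow> S \<subseteq> Pow (space M)"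
  using sets.sets_into_space by blast

lemma gens_sub: "Y \<in> measurable M N \<Longrightarrow> gens M Y N \<subseteq> sets M"
  unfolding gens_def by (auto intro: measurable_sets)

definition bddf :: "('a \<Rightarrow> real) \<Rightarrow> bool" where
  "bddf f \<longleftrightarrow> (\<exists>B. \<forall>x. \<bar>f x\<bar> \<le> B)"

lemma bddf_const[intro]: "bddf (\<lambda>_. c)"
  unfolding bddf_def by blast

lemma bddf_mult[intro]: "bddf f \<Longrightarrow> bddf g \<Longrightarrow> bddf (\<lambda>x. f x * g x)"
proof -
  assume "bddf f" "bddf g"
  then obtain A B where A: "\<forall>x. \<bar>f x\<bar> \<le> A" and B: "\<forall>x. \<bar>g x\<bar> \<le> B" unfolding bddf_def by blast
  have "\<bar>f x * g x\<bar> \<le> A * B" for x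
    unfolding abs_mult using A B by (meson abs_ge_zero mult_mono order_trans)
  then show ?thesis unfolding bddf_def by blast
qed

lemma bddf_add[intro]: "bddf f \<Longrightarrow> bddf g \<Longrightarrow> bddf (\<lambda>x. f x + g x)"
proof -
  assume "bddf f" "bddf g"
  then obtain A B where A: "\<forall>x. \<bar>f x\<bar> \<le> A" and B: "\<forall>x. \<bar>g x\<bar> \<le> B" unfolding bddf_def by blast
  have "\<bar>f x + g x\<bar> \<le> A + B" for x
    using A B abs_triangle_ineq[of "f x" "g x"] by (meson add_mono order_trans)
  then show ?thesis unfolding bddf_def by blast
qed

lemma bddf_sum[intro]: "(\<And>i. i \<in> I \<Longrightarrow> bddf (f i)) \<Longrightarrow> bddf (\<lambda>x. \<Sum>i\<in>I. f i x)"
proof (induction I rule: infinite_finite_induct)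
  case (infinite A) then show ?case by (simp add: bddf_const)
next
  case empty then show ?case unfolding bddf_def by auto
next
  case (insert i I)
  then have "bddf (\<lambda>x. f i x + (\<Sum>i\<in>I. f i x))" by (intro bddf_add) auto
  then show ?case using insert by simp
qed

lemma bddf_comp[intro]: "bddf f \<Longrightarrow> bddf (\<lambda>x. f (h x))"
  unfolding bddf_def by blast

lemma bddf_psi: "\<exists>B. \<forall>x y. \<bar>\<psi> x y\<bar> \<le> B \<Longrightarrow> bddf (\<lambda>\<omega>. \<psi> (a \<omega>) (b \<omega>))"
  unfolding bddf_def by blast

lemma bddf_integrable:
  assumes "prob_space M" "bddf f" "f \<in> borel_measurable M"
  shows "integrable M f"
proof -
  interpret prob_space M by fact
  obtain B where "\<forall>x. \<bar>f x\<bar> \<le> B" using assms(2) unfolding bddf_def by blast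
  then show ?thesis
    by (intro integrable_const_bound[where B=B]) (auto simp: assms(3))
qed

lemma sfs_of: "prob_space M \<Longrightarrow> subalgebra M F \<Longrightarrow> sigma_finite_subalgebra M F"
  by (rule finite_measure_subalgebra_is_sigma_finite)
     (simp add: finite_measure_subalgebra_def finite_measure_subalgebra_axioms_def prob_space_def)

lemma ce_sum:
  assumes "sigma_finite_subalgebra M F" "\<And>i. i \<in> I \<Longrightarrow> integrable M (f i)"
  shows "AE x in M. real_cond_exp M F (\<lambda>x. \<Sum>i\<in>I. f i x) x = (\<Sum>i\<in>I. real_cond_exp M F (f i) x)"
proof -
  interpret sigma_finite_subalgebra M F by fact
  define f' where "f' i = (if i \<in> I then f i else (\<lambda>_. 0))" for i
  have "\<And>i. integrable M (f' i)" unfolding f'_def using assms(2) by auto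
  then have "AE x in M. real_cond_exp M F (\<lambda>x. \<Sum>i\<in>I. f' i x) x = (\<Sum>i\<in>I. real_cond_exp M F (f' i) x)"
    by (rule real_cond_exp_sum)
  moreover have "(\<lambda>x. \<Sum>i\<in>I. f' i x) = (\<lambda>x. \<Sum>i\<in>I. f i x)" unfolding f'_def by (auto intro: sum.cong)
  moreover have "(\<Sum>i\<in>I. real_cond_exp M F (f' i) x) = (\<Sum>i\<in>I. real_cond_exp M F (f i) x)" for x
    unfolding f'_def by (auto intro: sum.cong)
  ultimately show ?thesis by simp
qed

lemma bddf_indicator[intro]: "bddf (indicator E :: _ \<Rightarrow> real)"
  unfolding bddf_def by (rule exI[of _ 1]) (simp add: indicator_def)

lemma ce_pull:
  assumes "sigma_finite_subalgebra M F" "prob_space M" "Z \<in> borel_measurable F" "bddf Z" "E \<in> sets M"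
  shows "AE x in M. real_cond_exp M F (\<lambda>x. Z x * indicator E x) x = Z x * cond_prob M F E x"
proof -
  interpret sigma_finite_subalgebra M F by fact
  have ZM: "Z \<in> borel_measurable M" using measurable_from_subalg[OF subalg assms(3)] .
  have "integrable M (\<lambda>x. Z x * indicator E x)"
    using assms ZM by (intro bddf_integrable) auto
  then show ?thesis unfolding cond_prob_def
    by (intro real_cond_exp_mult) (use assms in auto)
qed

lemma phi_meas:
  assumes "(\<lambda>(x,y). \<phi> x y) \<in> borel_measurable (N \<Otimes>\<^sub>M N)" "f \<in> measurable F N" "h \<in> measurable F N"
  shows "(\<lambda>\<omega>. \<phi> (f \<omega>) (h \<omega>)) \<in> borel_measurable F"
  using measurable_compose[OF measurable_Pair[OF assms(2,3)] assms(1)] by simp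

lemma C1_meas:
  assumes "(\<lambda>(x,y). \<phi> x y) \<in> borel_measurable (N \<Otimes>\<^sub>M N)"
  shows "(\<lambda>(x,y). C1 \<phi> x y) \<in> borel_measurable (N \<Otimes>\<^sub>M N)"
proof -
  have "(\<lambda>(x,y). C1 \<phi> x y) = (\<lambda>z. (\<lambda>(x,y). \<phi> x y) ((\<lambda>z. (fst z, fst z)) z))"
    by (auto simp: C1_def)
  also have "\<dots> \<in> borel_measurable (N \<Otimes>\<^sub>M N)"
    by (rule measurable_compose[OF _ assms]) (intro measurable_Pair measurable_fst)
  finally show ?thesis .
qed

lemma coll_meas:
  assumes "(\<lambda>(x,y). \<phi> x y) \<in> borel_measurable (N \<Otimes>\<^sub>M N)"
  shows "(\<lambda>(x,y). coll as bs \<phi> x y) \<in> borel_measurable (N \<Otimes>\<^sub>M N)"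
  unfolding coll_def C0_def using C1_meas[OF assms] assms by auto

lemma coll_bdd:
  assumes "\<exists>B. \<forall>x y. \<bar>\<phi> x y\<bar> \<le> B"
  shows "\<exists>B. \<forall>x y. \<bar>coll as bs \<phi> x y\<bar> \<le> B"
  using assms unfolding coll_def C0_def C1_def by auto

lemma dsum_delta:
  assumes "finite A" "finite B" "x \<in> A" "y \<in> B"
  shows "(\<Sum>l\<in>A. \<Sum>l'\<in>B. (if l = x \<and> l' = y then f l l' else 0)) = f x y"
proof -
  have "(\<Sum>l'\<in>B. (if l = x \<and> l' = y then f l l' else 0)) = (if l = x then f l y else 0)" for l
    using assms by (cases "l = x") (simp_all add: sum.delta')
  then show ?thesis using assms by (simp add: sum.delta')
qed

lemma RI:
  assumes "x \<notin> S"
  shows "(\<Sum>i\<in>PiE (insert x S) T. f i) = (\<Sum>y\<in>T x. \<Sum>g\<in>PiE S T. f (g(x := y)))"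
proof -
  have "(\<Sum>i\<in>PiE (insert x S) T. f i) = (\<Sum>z\<in>T x \<times> PiE S T. f ((\<lambda>(y, g). g(x := y)) z))"
    unfolding PiE_insert_eq by (rule sum.reindex[OF inj_combinator[OF assms], unfolded comp_def])
  also have "\<dots> = (\<Sum>(y,g)\<in>T x \<times> PiE S T. f (g(x := y)))"
    by (rule sum.cong) auto
  also have "\<dots> = (\<Sum>y\<in>T x. \<Sum>g\<in>PiE S T. f (g(x := y)))"
    by (rule sum.cartesian_product[symmetric])
  finally show ?thesis .
qed

lemma coll_cons:
  assumes "length xs = length ys"
  shows "coll (x#xs) (y#ys) \<psi> = coll [x] [y] (coll xs ys \<psi>)"
proof (cases "x = y")
  case True
  have "C1 (coll xs ys \<psi>) = C1 \<psi>" unfolding coll_def C1_def C0_def by (auto intro!: ext)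
  moreover have "\<exists>k < length (x#xs). (x#xs) ! k = (y#ys) ! k" using True by (intro exI[of _ 0]) simp
  ultimately show ?thesis using True unfolding coll_def by simp
next
  case False
  have "(\<exists>k < length (x#xs). (x#xs) ! k = (y#ys) ! k) \<longleftrightarrow> (\<exists>k < length xs. xs ! k = ys ! k)"
  proof
    assume "\<exists>k < length (x#xs). (x#xs) ! k = (y#ys) ! k"
    then obtain k where k: "k < length (x#xs)" "(x#xs) ! k = (y#ys) ! k" by blast
    then show "\<exists>k < length xs. xs ! k = ys ! k" using False
      by (cases k) auto
  next
    assume "\<exists>k < length xs. xs ! k = ys ! k"
    then obtain k where "k < length xs" "xs ! k = ys ! k" by blast
    then show "\<exists>k < length (x#xs). (x#xs) ! k = (y#ys) ! k" by (intro exI[of _ "Suc k"]) simp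
  qed
  then show ?thesis using False unfolding coll_def C0_def by simp
qed

lemma ce_lin:
  assumes sf: "sigma_finite_subalgebra M F" and fin: "finite I" "finite I'"
    and int: "\<And>g h. g \<in> I \<Longrightarrow> h \<in> I' \<Longrightarrow> integrable M (Y g h)"
  shows "AE \<omega> in M. real_cond_exp M F (\<lambda>\<omega>. \<Sum>g\<in>I. \<Sum>h\<in>I'. c g h * Y g h \<omega>) \<omega>
     = (\<Sum>g\<in>I. \<Sum>h\<in>I'. c g h * real_cond_exp M F (Y g h) \<omega>)"
proof -
  interpret sigma_finite_subalgebra M F by fact
  have a1: "AE \<omega> in M. real_cond_exp M F (\<lambda>\<omega>. \<Sum>g\<in>I. \<Sum>h\<in>I'. c g h * Y g h \<omega>) \<omega>
     = (\<Sum>g\<in>I. real_cond_exp M F (\<lambda>\<omega>. \<Sum>h\<in>I'. c g h * Y g h \<omega>) \<omega>)"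
    by (rule ce_sum[OF sf]) (use int in auto)
  have a2: "AE \<omega> in M. \<forall>g\<in>I. real_cond_exp M F (\<lambda>\<omega>. \<Sum>h\<in>I'. c g h * Y g h \<omega>) \<omega>
     = (\<Sum>h\<in>I'. real_cond_exp M F (\<lambda>\<omega>. c g h * Y g h \<omega>) \<omega>)"
    by (intro AE_finite_allI fin ce_sum[OF sf] integrable_mult_right int)
  have a3: "AE \<omega> in M. \<forall>g\<in>I. \<forall>h\<in>I'. real_cond_exp M F (\<lambda>\<omega>. c g h * Y g h \<omega>) \<omega>
     = c g h * real_cond_exp M F (Y g h) \<omega>"
    by (intro AE_finite_allI fin real_cond_exp_cmult int)
  show ?thesis using a1 a2 a3 by eventually_elim simp
qed

definition Phi :: "(nat \<Rightarrow> nat \<Rightarrow> nat \<Rightarrow> 'a \<Rightarrow> real) \<Rightarrow> (nat \<Rightarrow> nat \<Rightarrow> nat \<Rightarrow> 'a \<Rightarrow> 'b)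
   \<Rightarrow> ('b \<Rightarrow> 'b \<Rightarrow> real) \<Rightarrow> nat \<Rightarrow> nat \<Rightarrow> nat \<Rightarrow> nat \<Rightarrow> nat \<Rightarrow> 'a \<Rightarrow> real" where
  "Phi W \<xi> \<psi> Sm n i_top j_top s \<omega> =
    (\<Sum>i \<in> PiE {s..Sm} (\<lambda>_. {1..2^Sm}). \<Sum>j \<in> PiE {s..Sm} (\<lambda>_. {1..2^Sm}).
         (\<Prod>q = s..Sm. A_entry q ((i(Sm+1 := i_top)) (q+1)) (i q)
                       * A_entry q ((j(Sm+1 := j_top)) (q+1)) (j q))
         * W n s (i s) \<omega> * W n s (j s) \<omega>
         * coll (map i [s+1..<Sm+1]) (map j [s+1..<Sm+1]) \<psi> (\<xi> n s (i s) \<omega>) (\<xi> n s (j s) \<omega>))"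

lemma Phi_term:
  assumes t: "t < Sm" and g: "g \<in> PiE {Suc t..Sm} (\<lambda>_. R)" and h: "h \<in> PiE {Suc t..Sm} (\<lambda>_. R)"
  shows "(\<Prod>q = t..Sm. A_entry q (((g(t:=l))(Sm+1 := i_top)) (q+1)) ((g(t:=l)) q)
                       * A_entry q (((h(t:=l'))(Sm+1 := j_top)) (q+1)) ((h(t:=l')) q))
         * W n t ((g(t:=l)) t) \<omega> * W n t ((h(t:=l')) t) \<omega>
         * coll (map (g(t:=l)) [t+1..<Sm+1]) (map (h(t:=l')) [t+1..<Sm+1]) \<psi> (\<xi> n t ((g(t:=l)) t) \<omega>) (\<xi> n t ((h(t:=l')) t) \<omega>)
    = (\<Prod>q = Suc t..Sm. A_entry q ((g(Sm+1 := i_top)) (q+1)) (g q)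
                       * A_entry q ((h(Sm+1 := j_top)) (q+1)) (h q)) *
      (A_entry t (g (Suc t)) l * A_entry t (h (Suc t)) l' * W n t l \<omega> * W n t l' \<omega> *
       coll [g (Suc t)] [h (Suc t)] (coll (map g [Suc (Suc t)..<Sm+1]) (map h [Suc (Suc t)..<Sm+1]) \<psi>) (\<xi> n t l \<omega>) (\<xi> n t l' \<omega>))"
proof -
  have p: "(\<Prod>q = t..Sm. A_entry q (((g(t:=l))(Sm+1 := i_top)) (q+1)) ((g(t:=l)) q)
                       * A_entry q (((h(t:=l'))(Sm+1 := j_top)) (q+1)) ((h(t:=l')) q))
     = (A_entry t (g (Suc t)) l * A_entry t (h (Suc t)) l') *
       (\<Prod>q = Suc t..Sm. A_entry q ((g(Sm+1 := i_top)) (q+1)) (g q)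
                       * A_entry q ((h(Sm+1 := j_top)) (q+1)) (h q))"
  proof -
    have "(\<Prod>q = t..Sm. A_entry q (((g(t:=l))(Sm+1 := i_top)) (q+1)) ((g(t:=l)) q)
                       * A_entry q (((h(t:=l'))(Sm+1 := j_top)) (q+1)) ((h(t:=l')) q))
       = (A_entry t (((g(t:=l))(Sm+1 := i_top)) (t+1)) ((g(t:=l)) t)
                       * A_entry t (((h(t:=l'))(Sm+1 := j_top)) (t+1)) ((h(t:=l')) t)) *
         (\<Prod>q = Suc t..Sm. A_entry q (((g(t:=l))(Sm+1 := i_top)) (q+1)) ((g(t:=l)) q)
                       * A_entry q (((h(t:=l'))(Sm+1 := j_top)) (q+1)) ((h(t:=l')) q))"
      by (rule prod.atLeast_Suc_atMost) (use t in simp)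
    also have "\<dots> = (A_entry t (g (Suc t)) l * A_entry t (h (Suc t)) l') *
       (\<Prod>q = Suc t..Sm. A_entry q ((g(Sm+1 := i_top)) (q+1)) (g q)
                       * A_entry q ((h(Sm+1 := j_top)) (q+1)) (h q))"
      using t by (intro arg_cong2[where f="(*)"] prod.cong refl) auto
    finally show ?thesis .
  qed
  have mg: "map (g(t:=l)) [t+1..<Sm+1] = g (Suc t) # map g [Suc (Suc t)..<Sm+1]"
  proof -
    have "map (g(t:=l)) [t+1..<Sm+1] = map g [Suc t..<Sm+1]" by (intro map_cong) auto
    also have "[Suc t..<Sm+1] = Suc t # [Suc (Suc t)..<Sm+1]" using t by (simp add: upt_conv_Cons)
    finally show ?thesis by (simp only: list.map)
  qed
  have mh: "map (h(t:=l')) [t+1..<Sm+1] = h (Suc t) # map h [Suc (Suc t)..<Sm+1]"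
  proof -
    have "map (h(t:=l')) [t+1..<Sm+1] = map h [Suc t..<Sm+1]" by (intro map_cong) auto
    also have "[Suc t..<Sm+1] = Suc t # [Suc (Suc t)..<Sm+1]" using t by (simp add: upt_conv_Cons)
    finally show ?thesis by (simp only: list.map)
  qed
  have cc: "coll (g (Suc t) # map g [Suc (Suc t)..<Sm+1]) (h (Suc t) # map h [Suc (Suc t)..<Sm+1]) \<psi>
     = coll [g (Suc t)] [h (Suc t)] (coll (map g [Suc (Suc t)..<Sm+1]) (map h [Suc (Suc t)..<Sm+1]) \<psi>)"
    by (rule coll_cons) simp
  show ?thesis unfolding p mg mh cc fun_upd_same
    by (simp only: ac_simps)
qed

lemma swap4:
  "(\<Sum>l\<in>A. \<Sum>g\<in>B. \<Sum>l'\<in>C. \<Sum>h\<in>D. f l g l' h) = (\<Sum>g\<in>B. \<Sum>h\<in>D. \<Sum>l\<in>A. \<Sum>l'\<in>C. f l g l' h)"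
proof -
  have "(\<Sum>l\<in>A. \<Sum>g\<in>B. \<Sum>l'\<in>C. \<Sum>h\<in>D. f l g l' h) = (\<Sum>l\<in>A. \<Sum>g\<in>B. \<Sum>h\<in>D. \<Sum>l'\<in>C. f l g l' h)"
    by (intro sum.cong refl sum.swap)
  also have "\<dots> = (\<Sum>g\<in>B. \<Sum>l\<in>A. \<Sum>h\<in>D. \<Sum>l'\<in>C. f l g l' h)" by (rule sum.swap)
  also have "\<dots> = (\<Sum>g\<in>B. \<Sum>h\<in>D. \<Sum>l\<in>A. \<Sum>l'\<in>C. f l g l' h)" by (intro sum.cong refl sum.swap)
  finally show ?thesis .
qed

lemma Phi_split:
  assumes t: "t < Sm"
  shows "Phi W \<xi> \<psi> Sm n i_top j_top t \<omega> =
    (\<Sum>g\<in>PiE {Suc t..Sm} (\<lambda>_. {1..2^Sm}). \<Sum>h\<in>PiE {Suc t..Sm} (\<lambda>_. {1..2^Sm}).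
       (\<Prod>q = Suc t..Sm. A_entry q ((g(Sm+1 := i_top)) (q+1)) (g q)
                       * A_entry q ((h(Sm+1 := j_top)) (q+1)) (h q)) *
      (\<Sum>l\<in>{1..2^Sm}. \<Sum>l'\<in>{1..2^Sm}.
       A_entry t (g (Suc t)) l * A_entry t (h (Suc t)) l' * W n t l \<omega> * W n t l' \<omega> *
       coll [g (Suc t)] [h (Suc t)] (coll (map g [Suc (Suc t)..<Sm+1]) (map h [Suc (Suc t)..<Sm+1]) \<psi>) (\<xi> n t l \<omega>) (\<xi> n t l' \<omega>)))" (is "_ = ?rhs")
proof -
  have ins: "{t..Sm} = insert t {Suc t..Sm}" using t by auto
  have nin: "t \<notin> {Suc t..Sm}" by simp
  let ?P = "PiE {Suc t..Sm} (\<lambda>_. {1..2^Sm::nat})"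
  let ?R = "{1..2^Sm::nat}"
  define F where "F i j = (\<Prod>q = t..Sm. A_entry q ((i(Sm+1 := i_top)) (q+1)) (i q)
                       * A_entry q ((j(Sm+1 := j_top)) (q+1)) (j q))
         * W n t (i t) \<omega> * W n t (j t) \<omega>
         * coll (map i [t+1..<Sm+1]) (map j [t+1..<Sm+1]) \<psi> (\<xi> n t (i t) \<omega>) (\<xi> n t (j t) \<omega>)" for i j
  have "Phi W \<xi> \<psi> Sm n i_top j_top t \<omega> = (\<Sum>i\<in>PiE (insert t {Suc t..Sm}) (\<lambda>_. ?R). \<Sum>j\<in>PiE (insert t {Suc t..Sm}) (\<lambda>_. ?R). F i j)"
    unfolding Phi_def F_def ins[symmetric] ..
  also have "\<dots> = (\<Sum>l\<in>?R. \<Sum>g\<in>?P. \<Sum>j\<in>PiE (insert t {Suc t..Sm}) (\<lambda>_. ?R). F (g(t:=l)) j)"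
    by (rule RI[OF nin])
  also have "\<dots> = (\<Sum>l\<in>?R. \<Sum>g\<in>?P. \<Sum>l'\<in>?R. \<Sum>h\<in>?P. F (g(t:=l)) (h(t:=l')))"
    by (intro sum.cong refl RI[OF nin])
  also have "\<dots> = (\<Sum>g\<in>?P. \<Sum>h\<in>?P. \<Sum>l\<in>?R. \<Sum>l'\<in>?R. F (g(t:=l)) (h(t:=l')))"
    by (rule swap4)
  also have "\<dots> = ?rhs"
    unfolding sum_distrib_left F_def by (intro sum.cong refl Phi_term[OF t]) auto
  finally show ?thesis .
qed

lemma Phi_Sm: "Phi W \<xi> \<psi> Sm n i_top j_top Sm \<omega> = (\<Sum>i\<in>{1..2^Sm}. \<Sum>j\<in>{1..2^Sm}.
   A_entry Sm i_top i * A_entry Sm j_top j * W n Sm i \<omega> * W n Sm j \<omega> * \<psi> (\<xi> n Sm i \<omega>) (\<xi> n Sm j \<omega>))"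
proof -
  have ins: "{Sm..Sm} = insert Sm {}" by simp
  have nin: "Sm \<notin> {}" by simp
  show ?thesis
    unfolding Phi_def ins RI[OF nin]
    by (simp add: coll_def C0_def)
qed

context
  fixes M :: "'a measure" and X :: "'x measure" and \<pi>0 :: "'x measure"
    and K :: "nat \<Rightarrow> 'x \<Rightarrow> 'x measure" and g :: "nat \<Rightarrow> 'x \<Rightarrow> real"
    and Sm Np :: nat
    and \<xi> :: "nat \<Rightarrow> nat \<Rightarrow> nat \<Rightarrow> 'a \<Rightarrow> nat \<Rightarrow> 'x"
    and W :: "nat \<Rightarrow> nat \<Rightarrow> nat \<Rightarrow> 'a \<Rightarrow> real"
    and J L :: "nat \<Rightarrow> nat \<Rightarrow> nat \<Rightarrow> 'a \<Rightarrow> nat"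
  assumes model: "airpf M X \<pi>0 K g Sm Np \<xi> W J L"
begin

lemmas AX = model[unfolded airpf_def Let_def]

lemma PS: "prob_space M"
  using AX[THEN conjunct1] by blast

lemma xi_meas: "t \<le> Sm \<Longrightarrow> k \<in> {1..2^Sm} \<Longrightarrow> \<xi> p t k \<in> measurable M (blockM Np X)"
  using AX[THEN conjunct2, THEN conjunct2, THEN conjunct2, THEN conjunct2, THEN conjunct2, THEN conjunct1] by blast

lemma J_meas: "J p k i \<in> measurable M (count_space UNIV)"
  using AX[THEN conjunct2, THEN conjunct2, THEN conjunct2, THEN conjunct2, THEN conjunct2, THEN conjunct2, THEN conjunct1] by blast

lemma L_meas: "L p t k \<in> measurable M (count_space UNIV)"
  using AX[THEN conjunct2, THEN conjunct2, THEN conjunct2, THEN conjunct2, THEN conjunct2, THEN conjunct2, THEN conjunct2, THEN conjunct1] by blast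

lemma L_range: "L p t k \<omega> \<in> {1..2^Sm}"
  using AX[THEN conjunct2, THEN conjunct2, THEN conjunct2, THEN conjunct2, THEN conjunct2, THEN conjunct2, THEN conjunct2, THEN conjunct1] by blast

lemma g_meas: "g p \<in> borel_measurable X"
  using AX[THEN conjunct2, THEN conjunct2, THEN conjunct2, THEN conjunct2, THEN conjunct1] by blast

lemma g_bdd: "\<exists>B. \<forall>x. \<bar>g p x\<bar> \<le> B"
proof -
  have "(\<forall>x. 0 \<le> g p x) \<and> (\<exists>B. \<forall>x. g p x \<le> B)"
    using AX[THEN conjunct2, THEN conjunct2, THEN conjunct2, THEN conjunct2, THEN conjunct1] by blast
  then show ?thesis by force
qed

lemma W00: "k \<in> {1..2^Sm} \<Longrightarrow> W 0 0 k \<omega> = 1"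
  using AX[THEN conjunct2, THEN conjunct2, THEN conjunct2, THEN conjunct2, THEN conjunct2, THEN conjunct2, THEN conjunct2, THEN conjunct2, THEN conjunct1] by simp

lemma W1: "k \<in> {1..2^Sm} \<Longrightarrow>
   W p 1 k \<omega> = W p 0 k \<omega> * ((1 / real Np) * (\<Sum>i=1..Np. g p (\<xi> p 0 k \<omega> i)))"
  using AX[THEN conjunct2, THEN conjunct2, THEN conjunct2, THEN conjunct2, THEN conjunct2, THEN conjunct2, THEN conjunct2, THEN conjunct2, THEN conjunct2, THEN conjunct2, THEN conjunct2, THEN conjunct1] by blast

lemma Wstep: "t \<in> {1..Sm} \<Longrightarrow> k \<in> {1..2^Sm} \<Longrightarrow>
   W p (t+1) k \<omega> = (\<Sum>l=1..2^Sm. A_entry t k l * W p t l \<omega>)"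
  using AX[THEN conjunct2, THEN conjunct2, THEN conjunct2, THEN conjunct2, THEN conjunct2, THEN conjunct2, THEN conjunct2, THEN conjunct2, THEN conjunct2, THEN conjunct2, THEN conjunct2, THEN conjunct2, THEN conjunct2, THEN conjunct1] by blast

lemma W0succ: "k \<in> {1..2^Sm} \<Longrightarrow> W (p+1) 0 k \<omega> = W p (Sm+1) k \<omega>"
  using AX[THEN conjunct2, THEN conjunct2, THEN conjunct2, THEN conjunct2, THEN conjunct2, THEN conjunct2, THEN conjunct2, THEN conjunct2, THEN conjunct2, THEN conjunct2, THEN conjunct2, THEN conjunct2, THEN conjunct2, THEN conjunct2, THEN conjunct2, THEN conjunct2, THEN conjunct1] by simp

lemma xi_step: "1 \<le> t \<Longrightarrow> t < Sm \<Longrightarrow> k \<in> {1..2^Sm} \<Longrightarrow> \<xi> p (t+1) k \<omega> = \<xi> p t (L p t k \<omega>) \<omega>"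
  using AX[THEN conjunct2, THEN conjunct2, THEN conjunct2, THEN conjunct2, THEN conjunct2, THEN conjunct2, THEN conjunct2, THEN conjunct2, THEN conjunct2, THEN conjunct2, THEN conjunct2, THEN conjunct2, THEN conjunct2, THEN conjunct2, THEN conjunct2, THEN conjunct1] by blast

lemma Lcond: "t \<in> {1..Sm} \<Longrightarrow> S \<subseteq> {1..2^Sm} \<Longrightarrow> (\<forall>k \<in> S. l k \<in> {1..2^Sm}) \<Longrightarrow>
        (AE \<omega> in M.
          cond_prob M (H_alg M X Sm Np \<xi> J L (2 * ((Sm+1)*p + t))) {\<omega> \<in> space M. \<forall>k \<in> S. L p t k \<omega> = l k} \<omega>
            * (\<Prod>k \<in> S. W p (t+1) k \<omega>)
          = (\<Prod>k \<in> S. A_entry t k (l k) * W p t (l k) \<omega>))"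
  using AX[THEN conjunct2, THEN conjunct2, THEN conjunct2, THEN conjunct2, THEN conjunct2, THEN conjunct2, THEN conjunct2, THEN conjunct2, THEN conjunct2, THEN conjunct2, THEN conjunct2, THEN conjunct2, THEN conjunct2, THEN conjunct2, THEN conjunct1] by blast

lemma Ggens_sub: "\<Union>{gens M (\<xi> p t k) (blockM Np X) | p t k.
         t \<le> Sm \<and> k \<in> {1..2^Sm} \<and> (Sm+1)*p + t \<le> (Sm+1)*n + s} \<subseteq> sets M"
  using gens_sub[OF xi_meas] by blast

lemma Hgens_sub: "(\<Union>{gens M (\<xi> p t k) (blockM Np X) | p t k.
          t \<le> Sm \<and> k \<in> {1..2^Sm} \<and> 2*((Sm+1)*p + t) \<le> c}
      \<union> \<Union>{gens M (J p k i) (count_space UNIV) | p k i.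
          k \<in> {1..2^Sm} \<and> i \<in> {1..Np} \<and> 2*((Sm+1)*p + 1) \<le> c}
      \<union> \<Union>{gens M (L p t k) (count_space UNIV) | p t k.
          t \<in> {1..Sm} \<and> k \<in> {1..2^Sm} \<and> 2*((Sm+1)*p + t) + 1 \<le> c}) \<subseteq> sets M"
  using gens_sub[OF xi_meas] gens_sub[OF J_meas] gens_sub[OF L_meas] by blast

lemma subalg_G: "subalgebra M (G_alg M X Sm Np \<xi> n s)"
  unfolding G_alg_def by (rule subalg_sigma[OF Ggens_sub])

lemma subalg_H: "subalgebra M (H_alg M X Sm Np \<xi> J L c)"
  unfolding H_alg_def by (rule subalg_sigma[OF Hgens_sub])

lemma subalg_HG: "s \<le> t \<Longrightarrow> subalgebra (H_alg M X Sm Np \<xi> J L (2*((Sm+1)*n+t))) (G_alg M X Sm Np \<xi> n s)"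
  unfolding H_alg_def G_alg_def
  apply (rule subalg_sigma_mono)
   apply (rule subset_trans[OF _ Un_upper1])
   apply (rule subset_trans[OF _ Un_upper1])
   apply (rule Union_gens_mono)
   apply (elim conjE, intro conjI, assumption, assumption)
   apply (rule mult_le_mono2, linarith)
  by (rule sets_Pow[OF Hgens_sub])

lemma subalg_GG: "(Sm+1)*p+t \<le> (Sm+1)*n+s \<Longrightarrow> subalgebra (G_alg M X Sm Np \<xi> n s) (G_alg M X Sm Np \<xi> p t)"
  unfolding G_alg_def
  apply (rule subalg_sigma_mono)
   apply (rule Union_gens_mono)
   apply (elim conjE, intro conjI, assumption, assumption, linarith)
  by (rule sets_Pow[OF Ggens_sub])

lemma xi_meas_G: "t \<le> Sm \<Longrightarrow> k \<in> {1..2^Sm} \<Longrightarrow> (Sm+1)*p+t \<le> (Sm+1)*n+s \<Longrightarrow>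
   \<xi> p t k \<in> measurable (G_alg M X Sm Np \<xi> n s) (blockM Np X)"
  unfolding G_alg_def
  apply (rule meas_sigma_gen[OF xi_meas])
    apply assumption+
   apply (rule Union_upper)
   apply (simp only: mem_Collect_eq)
   apply (rule exI, rule exI, rule exI, rule conjI[OF refl])
   apply (intro conjI; assumption)
  by (rule sets_Pow[OF Ggens_sub])

lemma xi_comp: "f \<in> measurable F (blockM Np X) \<Longrightarrow> i \<in> {1..Np} \<Longrightarrow> (\<lambda>\<omega>. f \<omega> i) \<in> measurable F X"
  unfolding blockM_def by (rule measurable_compose[OF _ measurable_component_singleton]) auto

lemma g_bddf: "bddf (\<lambda>\<omega>. g p (h \<omega>))"
  using g_bdd[of p] unfolding bddf_def by blast

lemma W_good_from0:
  assumes base: "\<forall>k\<in>{1..2^Sm}. W p 0 k \<in> borel_measurable (G_alg M X Sm Np \<xi> p 0) \<and> bddf (W p 0 k)"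
  shows "t \<le> Sm+1 \<longrightarrow> (\<forall>k\<in>{1..2^Sm}. W p t k \<in> borel_measurable (G_alg M X Sm Np \<xi> p 0) \<and> bddf (W p t k))"
proof (induction t)
  case 0 then show ?case using base by simp
next
  case (Suc t)
  show ?case
  proof (cases t)
    case 0
    show ?thesis
    proof (intro impI ballI conjI)
      fix k :: nat assume k: "k \<in> {1..2^Sm}"
      have eq: "W p (Suc t) k = (\<lambda>\<omega>. W p 0 k \<omega> * ((1 / real Np) * (\<Sum>i=1..Np. g p (\<xi> p 0 k \<omega> i))))"
        using W1[OF k] 0 by auto
      have gm: "(\<lambda>\<omega>. g p (\<xi> p 0 k \<omega> i)) \<in> borel_measurable (G_alg M X Sm Np \<xi> p 0)" if "i \<in> {1..Np}" for i
        by (rule measurable_compose[OF xi_comp[OF xi_meas_G] g_meas]) (use k that in auto)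
      show "W p (Suc t) k \<in> borel_measurable (G_alg M X Sm Np \<xi> p 0)"
        unfolding eq using base k gm
        by (intro borel_measurable_times borel_measurable_const borel_measurable_sum) auto
      show "bddf (W p (Suc t) k)"
        unfolding eq using base k
        by (intro bddf_mult bddf_const bddf_sum g_bddf) auto
    qed
  next
    case (Suc t')
    show ?thesis
    proof (intro impI ballI conjI)
      fix k :: nat assume k: "k \<in> {1..2^Sm}" and le: "Suc t \<le> Sm + 1"
      have t: "t \<in> {1..Sm}" using Suc le by auto
      have eq: "W p (Suc t) k = (\<lambda>\<omega>. \<Sum>l=1..2^Sm. A_entry t k l * W p t l \<omega>)"
        using Wstep[OF t k] by auto
      have IH: "\<forall>k\<in>{1..2^Sm}. W p t k \<in> borel_measurable (G_alg M X Sm Np \<xi> p 0) \<and> bddf (W p t k)"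
        using Suc.IH le by simp
      show "W p (Suc t) k \<in> borel_measurable (G_alg M X Sm Np \<xi> p 0)"
        unfolding eq using IH
        by (intro borel_measurable_times borel_measurable_const borel_measurable_sum) auto
      show "bddf (W p (Suc t) k)"
        unfolding eq using IH
        by (intro bddf_mult bddf_const bddf_sum) auto
    qed
  qed
qed

lemma W_good_p: "\<forall>t. t \<le> Sm+1 \<longrightarrow> (\<forall>k\<in>{1..2^Sm}. W p t k \<in> borel_measurable (G_alg M X Sm Np \<xi> p 0) \<and> bddf (W p t k))"
proof (induction p)
  case 0
  have "\<forall>k\<in>{1..2^Sm}. W 0 0 k \<in> borel_measurable (G_alg M X Sm Np \<xi> 0 0) \<and> bddf (W 0 0 k)"
  proof
    fix k :: nat assume k: "k \<in> {1..2^Sm}"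
    have "W 0 0 k = (\<lambda>_. 1)" using W00[OF k] by auto
    then show "W 0 0 k \<in> borel_measurable (G_alg M X Sm Np \<xi> 0 0) \<and> bddf (W 0 0 k)"
      by (simp add: bddf_const)
  qed
  then show ?case using W_good_from0 by blast
next
  case (Suc p)
  have "\<forall>k\<in>{1..2^Sm}. W (Suc p) 0 k \<in> borel_measurable (G_alg M X Sm Np \<xi> (Suc p) 0) \<and> bddf (W (Suc p) 0 k)"
  proof
    fix k :: nat assume k: "k \<in> {1..2^Sm}"
    have eq: "W (Suc p) 0 k = W p (Sm+1) k" using W0succ[OF k] by auto
    have "W p (Sm+1) k \<in> borel_measurable (G_alg M X Sm Np \<xi> p 0) \<and> bddf (W p (Sm+1) k)"
      using Suc.IH k by blast
    moreover have "subalgebra (G_alg M X Sm Np \<xi> (Suc p) 0) (G_alg M X Sm Np \<xi> p 0)"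
      by (rule subalg_GG) simp
    ultimately show "W (Suc p) 0 k \<in> borel_measurable (G_alg M X Sm Np \<xi> (Suc p) 0) \<and> bddf (W (Suc p) 0 k)"
      unfolding eq using measurable_from_subalg by blast
  qed
  then show ?case using W_good_from0 by blast
qed

lemma W_meas: "t \<le> Sm+1 \<Longrightarrow> k \<in> {1..2^Sm} \<Longrightarrow> (Sm+1)*p \<le> (Sm+1)*n+s \<Longrightarrow>
  W p t k \<in> borel_measurable (G_alg M X Sm Np \<xi> n s)"
proof -
  assume a: "t \<le> Sm+1" "k \<in> {1..2^Sm}" "(Sm+1)*p \<le> (Sm+1)*n+s"
  have "W p t k \<in> borel_measurable (G_alg M X Sm Np \<xi> p 0)" using W_good_p[of p] a by auto
  then show ?thesis by (rule measurable_from_subalg[OF subalg_GG, rotated]) (use a in simp)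
qed

lemma W_bddf: "t \<le> Sm+1 \<Longrightarrow> k \<in> {1..2^Sm} \<Longrightarrow> bddf (W p t k)"
  using W_good_p[of p] by auto

lemma KL:
  assumes t: "1 \<le> t" "t < Sm" and a: "a \<in> {1..2^Sm}" and b: "b \<in> {1..2^Sm}"
    and \<phi>m: "(\<lambda>(x,y). \<phi> x y) \<in> borel_measurable (blockM Np X \<Otimes>\<^sub>M blockM Np X)"
    and \<phi>b: "\<exists>B. \<forall>x y. \<bar>\<phi> x y\<bar> \<le> B"
  shows "AE \<omega> in M. real_cond_exp M (H_alg M X Sm Np \<xi> J L (2*((Sm+1)*n+t)))
     (\<lambda>\<omega>. W n (t+1) a \<omega> * W n (t+1) b \<omega> * \<phi> (\<xi> n (t+1) a \<omega>) (\<xi> n (t+1) b \<omega>)) \<omega>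
   = (\<Sum>l\<in>{1..2^Sm}. \<Sum>l'\<in>{1..2^Sm}. A_entry t a l * A_entry t b l' * W n t l \<omega> * W n t l' \<omega>
        * coll [a] [b] \<phi> (\<xi> n t l \<omega>) (\<xi> n t l' \<omega>))"
proof -
  define H where "H = H_alg M X Sm Np \<xi> J L (2*((Sm+1)*n+t))"
  interpret sigma_finite_subalgebra M H unfolding H_def by (rule sfs_of[OF PS subalg_H])
  have xiH: "\<xi> n t l \<in> measurable H (blockM Np X)" if "l \<in> {1..2^Sm}" for l
    unfolding H_def
    by (rule measurable_from_subalg[OF subalg_HG[of t t n] xi_meas_G[of t l n n t]]) (use t that in auto)
  have WH: "W n t' k \<in> borel_measurable H" if "k \<in> {1..2^Sm}" "t' \<le> Sm+1" for k t'
    unfolding H_def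
    by (rule measurable_from_subalg[OF subalg_HG[of t t n] W_meas[of t' k n n t]]) (use t that in auto)
  have toM: "f \<in> measurable H N \<Longrightarrow> f \<in> measurable M N" for f N
    using measurable_from_subalg[OF subalg] by blast
  have Lm[measurable]: "L n t k \<in> measurable M (count_space UNIV)" for k by (rule L_meas)
  have LM: "{\<omega> \<in> space M. \<forall>k\<in>S. L n t k \<omega> = lf k} \<in> sets M" if "finite S" for S lf
    using that by measurable
  let ?Y = "\<lambda>\<omega>. W n (t+1) a \<omega> * W n (t+1) b \<omega> * \<phi> (\<xi> n (t+1) a \<omega>) (\<xi> n (t+1) b \<omega>)"
  let ?R = "{1..2^Sm} :: nat set"
  have tS: "t \<in> {1..Sm}" "t+1 \<le> Sm+1" "t \<le> Sm+1" using t by auto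
  have WM: "W n t' k \<in> borel_measurable M" if "k \<in> ?R" "t' \<le> Sm+1" for k t'
    using toM[OF WH[OF that]] .
  have xiM: "\<xi> n t' k \<in> measurable M (blockM Np X)" if "k \<in> ?R" "t' \<le> Sm" for k t'
    using xi_meas that by auto
  have YM: "?Y \<in> borel_measurable M"
    using WM[OF a tS(2)] WM[OF b tS(2)] phi_meas[OF \<phi>m xiM[OF a] xiM[OF b]] t
    by (intro borel_measurable_times) auto
  have ae_space: "AE \<omega> in M. P \<omega>" if "\<forall>\<omega>\<in>space M. P \<omega>" for P
    using that by (intro AE_I2) auto
  show ?thesis
  proof (cases "a = b")
    case False
    define lf where "lf l l' = (\<lambda>k::nat. if k = a then l else l')" for l l' :: nat
    define E where "E l l' = {\<omega> \<in> space M. \<forall>k\<in>{a,b}. L n t k \<omega> = lf l l' k}" for l l'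
    define Z where "Z l l' \<omega> = W n (t+1) a \<omega> * W n (t+1) b \<omega> * \<phi> (\<xi> n t l \<omega>) (\<xi> n t l' \<omega>)" for l l' \<omega>
    have EM: "E l l' \<in> sets M" for l l' unfolding E_def by (rule LM) simp
    have ZH: "Z l l' \<in> borel_measurable H" if "l \<in> ?R" "l' \<in> ?R" for l l'
      unfolding Z_def using WH[OF a tS(2)] WH[OF b tS(2)] phi_meas[OF \<phi>m xiH[OF that(1)] xiH[OF that(2)]]
      by (intro borel_measurable_times) auto
    have ZB: "bddf (Z l l')" for l l'
      unfolding Z_def using W_bddf[OF tS(2) a] W_bddf[OF tS(2) b] bddf_psi[OF \<phi>b]
      by (intro bddf_mult) auto
    have ZIM: "(\<lambda>\<omega>. Z l l' \<omega> * indicator (E l l') \<omega>) \<in> borel_measurable M" if "l \<in> ?R" "l' \<in> ?R" for l l'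
      using toM[OF ZH[OF that]] EM by (intro borel_measurable_times) auto
    have decomp: "\<forall>\<omega>\<in>space M. ?Y \<omega> = (\<Sum>l\<in>?R. \<Sum>l'\<in>?R. Z l l' \<omega> * indicator (E l l') \<omega>)"
    proof
      fix \<omega> assume \<omega>: "\<omega> \<in> space M"
      have "Z l l' \<omega> * indicator (E l l') \<omega> = (if l = L n t a \<omega> \<and> l' = L n t b \<omega> then Z l l' \<omega> else 0)" for l l'
        using False \<omega> unfolding E_def lf_def indicator_def by auto
      then have "(\<Sum>l\<in>?R. \<Sum>l'\<in>?R. Z l l' \<omega> * indicator (E l l') \<omega>) = Z (L n t a \<omega>) (L n t b \<omega>) \<omega>"
        using dsum_delta[of ?R ?R "L n t a \<omega>" "L n t b \<omega>" "\<lambda>l l'. Z l l' \<omega>"] L_range by simp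
      also have "\<dots> = ?Y \<omega>" unfolding Z_def using xi_step[OF t a] xi_step[OF t b] by simp
      finally show "?Y \<omega> = (\<Sum>l\<in>?R. \<Sum>l'\<in>?R. Z l l' \<omega> * indicator (E l l') \<omega>)" by simp
    qed
    have s1: "AE \<omega> in M. real_cond_exp M H ?Y \<omega> = real_cond_exp M H (\<lambda>\<omega>. \<Sum>l\<in>?R. \<Sum>l'\<in>?R. Z l l' \<omega> * indicator (E l l') \<omega>) \<omega>"
      by (rule real_cond_exp_cong[OF ae_space[OF decomp] YM]) (intro borel_measurable_sum ZIM; simp)
    have s2: "AE \<omega> in M. real_cond_exp M H (\<lambda>\<omega>. \<Sum>l\<in>?R. \<Sum>l'\<in>?R. Z l l' \<omega> * indicator (E l l') \<omega>) \<omega>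
       = (\<Sum>l\<in>?R. real_cond_exp M H (\<lambda>\<omega>. \<Sum>l'\<in>?R. Z l l' \<omega> * indicator (E l l') \<omega>) \<omega>)"
      by (rule ce_sum[OF sigma_finite_subalgebra_axioms])
         (intro bddf_integrable[OF PS] bddf_sum bddf_mult ZB bddf_indicator borel_measurable_sum ZIM; simp)
    have s3: "AE \<omega> in M. \<forall>l\<in>?R. real_cond_exp M H (\<lambda>\<omega>. \<Sum>l'\<in>?R. Z l l' \<omega> * indicator (E l l') \<omega>) \<omega>
       = (\<Sum>l'\<in>?R. real_cond_exp M H (\<lambda>\<omega>. Z l l' \<omega> * indicator (E l l') \<omega>) \<omega>)"
      by (intro AE_finite_allI ce_sum[OF sigma_finite_subalgebra_axioms] bddf_integrable[OF PS] bddf_mult ZB bddf_indicator ZIM) auto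
    have s4: "AE \<omega> in M. \<forall>l\<in>?R. \<forall>l'\<in>?R. real_cond_exp M H (\<lambda>\<omega>. Z l l' \<omega> * indicator (E l l') \<omega>) \<omega>
       = Z l l' \<omega> * cond_prob M H (E l l') \<omega>"
      by (intro AE_finite_allI ce_pull[OF sigma_finite_subalgebra_axioms PS] ZH ZB EM) auto
    have s5: "AE \<omega> in M. \<forall>l\<in>?R. \<forall>l'\<in>?R. cond_prob M H (E l l') \<omega> * (\<Prod>k\<in>{a,b}. W n (t+1) k \<omega>)
       = (\<Prod>k\<in>{a,b}. A_entry t k (lf l l' k) * W n t (lf l l' k) \<omega>)"
      unfolding E_def H_def
      by (intro AE_finite_allI Lcond[OF tS(1)]) (use a b in \<open>auto simp: lf_def\<close>)
    show ?thesis
      using s1 s2 s3 s4 s5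
    proof (eventually_elim)
      case (elim \<omega>)
      have "real_cond_exp M H ?Y \<omega> = (\<Sum>l\<in>?R. \<Sum>l'\<in>?R. Z l l' \<omega> * cond_prob M H (E l l') \<omega>)"
        using elim by simp
      also have "\<dots> = (\<Sum>l\<in>?R. \<Sum>l'\<in>?R. A_entry t a l * A_entry t b l' * W n t l \<omega> * W n t l' \<omega>
        * coll [a] [b] \<phi> (\<xi> n t l \<omega>) (\<xi> n t l' \<omega>))"
      proof (intro sum.cong refl)
        fix l l' assume ll: "l \<in> ?R" "l' \<in> ?R"
        have "cond_prob M H (E l l') \<omega> * (W n (t+1) a \<omega> * W n (t+1) b \<omega>)
            = A_entry t a l * W n t l \<omega> * (A_entry t b l' * W n t l' \<omega>)"
          using elim(5) ll False by (simp add: lf_def)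
        moreover have "coll [a] [b] \<phi> = \<phi>" using False by (simp add: coll_def C0_def)
        ultimately show "Z l l' \<omega> * cond_prob M H (E l l') \<omega> = A_entry t a l * A_entry t b l' * W n t l \<omega> * W n t l' \<omega>
        * coll [a] [b] \<phi> (\<xi> n t l \<omega>) (\<xi> n t l' \<omega>)"
          unfolding Z_def by (simp add: algebra_simps)
      qed
      finally show ?case unfolding H_def .
    qed
  next
    case True
    define E where "E l = {\<omega> \<in> space M. \<forall>k\<in>{a}. L n t k \<omega> = (\<lambda>_. l) k}" for l
    define Z where "Z l \<omega> = W n (t+1) a \<omega> * W n (t+1) a \<omega> * \<phi> (\<xi> n t l \<omega>) (\<xi> n t l \<omega>)" for l \<omega>
    have EM: "E l \<in> sets M" for l unfolding E_def by (rule LM) simp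
    have ZH: "Z l \<in> borel_measurable H" if "l \<in> ?R" for l
      unfolding Z_def using WH[OF a tS(2)] phi_meas[OF \<phi>m xiH[OF that(1)] xiH[OF that(1)]]
      by (intro borel_measurable_times) auto
    have ZB: "bddf (Z l)" for l
      unfolding Z_def using W_bddf[OF tS(2) a] bddf_psi[OF \<phi>b]
      by (intro bddf_mult) auto
    have ZIM: "(\<lambda>\<omega>. Z l \<omega> * indicator (E l) \<omega>) \<in> borel_measurable M" if "l \<in> ?R" for l
      using toM[OF ZH[OF that]] EM by (intro borel_measurable_times) auto
    have decomp: "\<forall>\<omega>\<in>space M. ?Y \<omega> = (\<Sum>l\<in>?R. Z l \<omega> * indicator (E l) \<omega>)"
    proof
      fix \<omega> assume \<omega>: "\<omega> \<in> space M"
      have "Z l \<omega> * indicator (E l) \<omega> = (if l = L n t a \<omega> then Z l \<omega> else 0)" for l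
        using \<omega> unfolding E_def indicator_def by auto
      then have "(\<Sum>l\<in>?R. Z l \<omega> * indicator (E l) \<omega>) = Z (L n t a \<omega>) \<omega>"
        using L_range by (simp add: sum.delta')
      also have "\<dots> = ?Y \<omega>" unfolding Z_def using xi_step[OF t a] True by simp
      finally show "?Y \<omega> = (\<Sum>l\<in>?R. Z l \<omega> * indicator (E l) \<omega>)" by simp
    qed
    have s1: "AE \<omega> in M. real_cond_exp M H ?Y \<omega> = real_cond_exp M H (\<lambda>\<omega>. \<Sum>l\<in>?R. Z l \<omega> * indicator (E l) \<omega>) \<omega>"
      by (rule real_cond_exp_cong[OF ae_space[OF decomp] YM]) (intro borel_measurable_sum ZIM; simp)
    have s2: "AE \<omega> in M. real_cond_exp M H (\<lambda>\<omega>. \<Sum>l\<in>?R. Z l \<omega> * indicator (E l) \<omega>) \<omega>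
       = (\<Sum>l\<in>?R. real_cond_exp M H (\<lambda>\<omega>. Z l \<omega> * indicator (E l) \<omega>) \<omega>)"
      by (intro ce_sum[OF sigma_finite_subalgebra_axioms] bddf_integrable[OF PS] bddf_mult ZB bddf_indicator ZIM) auto
    have s4: "AE \<omega> in M. \<forall>l\<in>?R. real_cond_exp M H (\<lambda>\<omega>. Z l \<omega> * indicator (E l) \<omega>) \<omega>
       = Z l \<omega> * cond_prob M H (E l) \<omega>"
      by (intro AE_finite_allI ce_pull[OF sigma_finite_subalgebra_axioms PS] ZH ZB EM) auto
    have s5: "AE \<omega> in M. \<forall>l\<in>?R. cond_prob M H (E l) \<omega> * (\<Prod>k\<in>{a}. W n (t+1) k \<omega>)
       = (\<Prod>k\<in>{a}. A_entry t k ((\<lambda>_. l) k) * W n t ((\<lambda>_. l) k) \<omega>)"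
      unfolding E_def H_def
      by (intro AE_finite_allI Lcond[OF tS(1)]) (use a in auto)
    show ?thesis
      using s1 s2 s4 s5
    proof (eventually_elim)
      case (elim \<omega>)
      have Wa: "W n (t+1) a \<omega> = (\<Sum>l'\<in>?R. A_entry t a l' * W n t l' \<omega>)"
        using Wstep[OF tS(1) a] by simp
      have "real_cond_exp M H ?Y \<omega> = (\<Sum>l\<in>?R. Z l \<omega> * cond_prob M H (E l) \<omega>)"
        using elim by simp
      also have "\<dots> = (\<Sum>l\<in>?R. A_entry t a l * W n t l \<omega> * \<phi> (\<xi> n t l \<omega>) (\<xi> n t l \<omega>) * W n (t+1) a \<omega>)"
      proof (intro sum.cong refl)
        fix l assume ll: "l \<in> ?R"
        have "cond_prob M H (E l) \<omega> * W n (t+1) a \<omega> = A_entry t a l * W n t l \<omega>"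
          using elim(4) ll by simp
        then show "Z l \<omega> * cond_prob M H (E l) \<omega> = A_entry t a l * W n t l \<omega> * \<phi> (\<xi> n t l \<omega>) (\<xi> n t l \<omega>) * W n (t+1) a \<omega>"
          unfolding Z_def by (simp add: algebra_simps)
      qed
      also have "\<dots> = (\<Sum>l\<in>?R. \<Sum>l'\<in>?R. A_entry t a l * A_entry t b l' * W n t l \<omega> * W n t l' \<omega>
        * coll [a] [b] \<phi> (\<xi> n t l \<omega>) (\<xi> n t l' \<omega>))"
      proof (intro sum.cong refl)
        fix l assume ll: "l \<in> ?R"
        have c: "coll [a] [a] \<phi> x y = \<phi> x x" for x y by (simp add: coll_def C1_def)
        show "A_entry t a l * W n t l \<omega> * \<phi> (\<xi> n t l \<omega>) (\<xi> n t l \<omega>) * W n (t+1) a \<omega> =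
          (\<Sum>l'\<in>?R. A_entry t a l * A_entry t b l' * W n t l \<omega> * W n t l' \<omega>
           * coll [a] [b] \<phi> (\<xi> n t l \<omega>) (\<xi> n t l' \<omega>))"
          unfolding Wa True[symmetric] c by (simp add: sum_distrib_left algebra_simps)
      qed
      finally show ?case unfolding H_def .
    qed
  qed
qed

lemma step:
  assumes t: "1 \<le> t" "t < Sm" 
    and \<psi>m: "(\<lambda>(x,y). \<psi> x y) \<in> borel_measurable (blockM Np X \<Otimes>\<^sub>M blockM Np X)"
    and \<psi>b: "\<exists>B. \<forall>x y. \<bar>\<psi> x y\<bar> \<le> B"
  shows "AE \<omega> in M. real_cond_exp M (H_alg M X Sm Np \<xi> J L (2*((Sm+1)*n+t)))
     (Phi W \<xi> \<psi> Sm n i_top j_top (Suc t)) \<omega> = Phi W \<xi> \<psi> Sm n i_top j_top t \<omega>"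
proof -
  define H where "H = H_alg M X Sm Np \<xi> J L (2*((Sm+1)*n+t))"
  have sf: "sigma_finite_subalgebra M H" unfolding H_def by (rule sfs_of[OF PS subalg_H])
  let ?P = "PiE {Suc t..Sm} (\<lambda>_. {1..2^Sm::nat})"
  let ?R = "{1..2^Sm::nat}"
  define \<phi> where "\<phi> g h = coll (map g [Suc (Suc t)..<Sm+1]) (map h [Suc (Suc t)..<Sm+1]) \<psi>" for g h :: "nat \<Rightarrow> nat"
  define c where "c g h = (\<Prod>q = Suc t..Sm. A_entry q ((g(Sm+1 := i_top)) (q+1)) (g q)
                       * A_entry q ((h(Sm+1 := j_top)) (q+1)) (h q))" for g h :: "nat \<Rightarrow> nat"
  define Y where "Y g h = (\<lambda>\<omega>. W n (t+1) (g (Suc t)) \<omega> * W n (t+1) (h (Suc t)) \<omega>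
      * \<phi> g h (\<xi> n (t+1) (g (Suc t)) \<omega>) (\<xi> n (t+1) (h (Suc t)) \<omega>))" for g h
  have gR: "g (Suc t) \<in> ?R" if "g \<in> ?P" for g using that t by auto
  have \<phi>m: "(\<lambda>(x,y). \<phi> g h x y) \<in> borel_measurable (blockM Np X \<Otimes>\<^sub>M blockM Np X)" for g h
    unfolding \<phi>_def by (rule coll_meas[OF \<psi>m])
  have \<phi>b: "\<exists>B. \<forall>x y. \<bar>\<phi> g h x y\<bar> \<le> B" for g h
    unfolding \<phi>_def by (rule coll_bdd[OF \<psi>b])
  have eqS: "Phi W \<xi> \<psi> Sm n i_top j_top (Suc t) = (\<lambda>\<omega>. \<Sum>g\<in>?P. \<Sum>h\<in>?P. c g h * Y g h \<omega>)"
    unfolding Phi_def c_def Y_def \<phi>_def by (intro ext sum.cong refl) (simp only: mult.assoc Suc_eq_plus1)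
  have WM: "W n t' k \<in> borel_measurable M" if "k \<in> ?R" "t' \<le> Sm+1" for k t'
  proof -
    have "W n t' k \<in> borel_measurable (G_alg M X Sm Np \<xi> n 0)" by (rule W_meas) (use that in auto)
    then show ?thesis by (rule measurable_from_subalg[OF subalg_G])
  qed
  have int: "integrable M (Y g h)" if "g \<in> ?P" "h \<in> ?P" for g h
    unfolding Y_def
    using t gR[OF that(1)] gR[OF that(2)]
    by (intro bddf_integrable[OF PS] bddf_mult W_bddf bddf_psi[OF \<phi>b] borel_measurable_times WM
        phi_meas[OF \<phi>m] xi_meas) auto
  have AE1: "AE \<omega> in M. real_cond_exp M H (\<lambda>\<omega>. \<Sum>g\<in>?P. \<Sum>h\<in>?P. c g h * Y g h \<omega>) \<omega>
     = (\<Sum>g\<in>?P. \<Sum>h\<in>?P. c g h * real_cond_exp M H (Y g h) \<omega>)"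
    by (rule ce_lin[OF sf], (intro finite_PiE; simp), (intro finite_PiE; simp), (rule int; assumption))
  have AE2: "AE \<omega> in M. \<forall>g\<in>?P. \<forall>h\<in>?P. real_cond_exp M H (Y g h) \<omega> =
     (\<Sum>l\<in>?R. \<Sum>l'\<in>?R. A_entry t (g (Suc t)) l * A_entry t (h (Suc t)) l' * W n t l \<omega> * W n t l' \<omega>
        * coll [g (Suc t)] [h (Suc t)] (\<phi> g h) (\<xi> n t l \<omega>) (\<xi> n t l' \<omega>))"
    unfolding Y_def H_def
    by (intro AE_finite_allI finite_PiE KL[OF t] gR \<phi>m \<phi>b) auto
  show ?thesis
    using AE1 AE2 unfolding eqS[symmetric] H_def[symmetric]
  proof eventually_elim
    case (elim \<omega>)
    show ?case unfolding elim(1) Phi_split[OF t(2)] c_def[symmetric] \<phi>_def[symmetric]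
      using elim(2) by (intro sum.cong refl) auto
  qed
qed

lemma Phi_meas:
  assumes t: "t \<le> Sm"
    and \<psi>m: "(\<lambda>(x,y). \<psi> x y) \<in> borel_measurable (blockM Np X \<Otimes>\<^sub>M blockM Np X)"
  shows "Phi W \<xi> \<psi> Sm n i_top j_top t \<in> borel_measurable (G_alg M X Sm Np \<xi> n t)"
  unfolding Phi_def[abs_def]
  using t
  by (intro borel_measurable_sum borel_measurable_times borel_measurable_const W_meas
      phi_meas[OF coll_meas[OF \<psi>m]] xi_meas_G) (auto simp: PiE_iff)

lemma Phi_bddf:
  assumes \<psi>b: "\<exists>B. \<forall>x y. \<bar>\<psi> x y\<bar> \<le> B" and t: "t \<le> Sm"
  shows "bddf (Phi W \<xi> \<psi> Sm n i_top j_top t)"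
  unfolding Phi_def[abs_def]
  using t
  by (intro bddf_sum bddf_mult bddf_const W_bddf bddf_psi[OF coll_bdd[OF \<psi>b]]) (auto simp: PiE_iff)

lemma Phi_int:
  assumes t: "t \<le> Sm"
    and \<psi>m: "(\<lambda>(x,y). \<psi> x y) \<in> borel_measurable (blockM Np X \<Otimes>\<^sub>M blockM Np X)"
    and \<psi>b: "\<exists>B. \<forall>x y. \<bar>\<psi> x y\<bar> \<le> B"
  shows "integrable M (Phi W \<xi> \<psi> Sm n i_top j_top t)"
  by (rule bddf_integrable[OF PS Phi_bddf[OF \<psi>b t] measurable_from_subalg[OF subalg_G Phi_meas[OF t \<psi>m]]])

lemma chain:
  assumes s: "1 \<le> s" "s \<le> t" "t \<le> Sm"
    and \<psi>m: "(\<lambda>(x,y). \<psi> x y) \<in> borel_measurable (blockM Np X \<Otimes>\<^sub>M blockM Np X)"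
    and \<psi>b: "\<exists>B. \<forall>x y. \<bar>\<psi> x y\<bar> \<le> B"
  shows "AE \<omega> in M. real_cond_exp M (G_alg M X Sm Np \<xi> n s) (Phi W \<xi> \<psi> Sm n i_top j_top Sm) \<omega>
     = real_cond_exp M (G_alg M X Sm Np \<xi> n s) (Phi W \<xi> \<psi> Sm n i_top j_top t) \<omega>"
  using s
proof (induction "Sm - t" arbitrary: t)
  case 0
  then have "t = Sm" by simp
  then show ?case by simp
next
  case (Suc d)
  define G where "G = G_alg M X Sm Np \<xi> n s"
  define H where "H = H_alg M X Sm Np \<xi> J L (2*((Sm+1)*n+t))"
  interpret sigma_finite_subalgebra M G unfolding G_def by (rule sfs_of[OF PS subalg_G])
  have t: "1 \<le> t" "t < Sm" using Suc by auto
  have IH: "AE \<omega> in M. real_cond_exp M G (Phi W \<xi> \<psi> Sm n i_top j_top Sm) \<omega>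
     = real_cond_exp M G (Phi W \<xi> \<psi> Sm n i_top j_top (Suc t)) \<omega>"
    unfolding G_def using Suc by (intro Suc.hyps) auto
  have N: "AE \<omega> in M. real_cond_exp M G (real_cond_exp M H (Phi W \<xi> \<psi> Sm n i_top j_top (Suc t))) \<omega>
     = real_cond_exp M G (Phi W \<xi> \<psi> Sm n i_top j_top (Suc t)) \<omega>"
  proof -
    have sub1: "subalgebra M H" unfolding H_def by (rule subalg_H)
    have sub2: "subalgebra H G" unfolding H_def G_def by (rule subalg_HG) (use Suc in auto)
    have int: "integrable M (Phi W \<xi> \<psi> Sm n i_top j_top (Suc t))" by (rule Phi_int[OF _ \<psi>m \<psi>b]) (use t in auto)
    show ?thesis by (rule real_cond_exp_nested_subalg[OF sub1 sub2 int])
  qed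
  have C: "AE \<omega> in M. real_cond_exp M G (real_cond_exp M H (Phi W \<xi> \<psi> Sm n i_top j_top (Suc t))) \<omega>
     = real_cond_exp M G (Phi W \<xi> \<psi> Sm n i_top j_top t) \<omega>"
    unfolding H_def
    by (rule real_cond_exp_cong[OF step[OF t \<psi>m \<psi>b] borel_measurable_cond_exp2
        measurable_from_subalg[OF subalg_G Phi_meas[OF _ \<psi>m]]]) (use t in auto)
  show ?case using IH N C unfolding G_def[symmetric] by eventually_elim simp
qed

end

theorem lemma2:
  fixes M :: "'a measure" and X :: "'x measure" and \<pi>0 :: "'x measure"
    and K :: "nat \<Rightarrow> 'x \<Rightarrow> 'x measure" and g :: "nat \<Rightarrow> 'x \<Rightarrow> real"
    and Sm Np :: nat
    and \<xi> :: "nat \<Rightarrow> nat \<Rightarrow> nat \<Rightarrow> 'a \<Rightarrow> nat \<Rightarrow> 'x"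
    and W :: "nat \<Rightarrow> nat \<Rightarrow> nat \<Rightarrow> 'a \<Rightarrow> real"
    and J L :: "nat \<Rightarrow> nat \<Rightarrow> nat \<Rightarrow> 'a \<Rightarrow> nat"
    and \<psi> :: "(nat \<Rightarrow> 'x) \<Rightarrow> (nat \<Rightarrow> 'x) \<Rightarrow> real"
    and n s i_top j_top :: nat
  assumes model: "airpf M X \<pi>0 K g Sm Np \<xi> W J L"
    and Np_pos: "Np \<ge> 1"
    and \<psi>_meas: "(\<lambda>(x, y). \<psi> x y) \<in> borel_measurable (blockM Np X \<Otimes>\<^sub>M blockM Np X)"
    and \<psi>_bdd: "\<exists>B. \<forall>x y. \<bar>\<psi> x y\<bar> \<le> B"
    and n_pos: "n \<ge> 1"
    and s_range: "1 \<le> s" "s < Sm"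
    and i_top: "i_top \<in> {1..2^Sm}" and j_top: "j_top \<in> {1..2^Sm}"
  shows "AE \<omega> in M.
    (\<Sum>i \<in> {1..2^Sm}. \<Sum>j \<in> {1..2^Sm}.
       real_cond_exp M (G_alg M X Sm Np \<xi> n s)
         (\<lambda>\<omega>. A_entry Sm i_top i * A_entry Sm j_top j * W n Sm i \<omega> * W n Sm j \<omega>
                * \<psi> (\<xi> n Sm i \<omega>) (\<xi> n Sm j \<omega>)) \<omega>)
    = (\<Sum>i \<in> PiE {s..Sm} (\<lambda>_. {1..2^Sm}). \<Sum>j \<in> PiE {s..Sm} (\<lambda>_. {1..2^Sm}).
         (\<Prod>q = s..Sm. A_entry q ((i(Sm+1 := i_top)) (q+1)) (i q)
                       * A_entry q ((j(Sm+1 := j_top)) (q+1)) (j q))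
         * W n s (i s) \<omega> * W n s (j s) \<omega>
         * coll (map i [s+1..<Sm+1]) (map j [s+1..<Sm+1]) \<psi> (\<xi> n s (i s) \<omega>) (\<xi> n s (j s) \<omega>))"
proof -
  define G where "G = G_alg M X Sm Np \<xi> n s"
  have PSM: "prob_space M" by (rule PS[OF model])
  have sf: "sigma_finite_subalgebra M G" unfolding G_def by (rule sfs_of[OF PSM subalg_G[OF model]])
  interpret sigma_finite_subalgebra M G by (rule sf)
  let ?R = "{1..2^Sm::nat}"
  define Y where "Y i j = (\<lambda>\<omega>. A_entry Sm i_top i * A_entry Sm j_top j * W n Sm i \<omega> * W n Sm j \<omega>
                * \<psi> (\<xi> n Sm i \<omega>) (\<xi> n Sm j \<omega>))" for i j
  have WM: "W n Sm k \<in> borel_measurable M" if "k \<in> ?R" for k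
  proof -
    have "W n Sm k \<in> borel_measurable (G_alg M X Sm Np \<xi> n 0)" by (rule W_meas[OF model]) (use that in auto)
    then show ?thesis by (rule measurable_from_subalg[OF subalg_G[OF model]])
  qed
  have int: "integrable M (Y i j)" if "i \<in> ?R" "j \<in> ?R" for i j
    unfolding Y_def using that
    by (intro bddf_integrable[OF PSM] bddf_mult bddf_const W_bddf[OF model] bddf_psi[OF \<psi>_bdd]
        borel_measurable_times borel_measurable_const WM phi_meas[OF \<psi>_meas] xi_meas[OF model]) auto
  have A1: "AE \<omega> in M. real_cond_exp M G (\<lambda>\<omega>. \<Sum>i\<in>?R. \<Sum>j\<in>?R. 1 * Y i j \<omega>) \<omega>
     = (\<Sum>i\<in>?R. \<Sum>j\<in>?R. 1 * real_cond_exp M G (Y i j) \<omega>)"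
    by (rule ce_lin[OF sf], simp, simp, rule int; assumption)
  have eqSm: "(\<lambda>\<omega>. \<Sum>i\<in>?R. \<Sum>j\<in>?R. 1 * Y i j \<omega>) = Phi W \<xi> \<psi> Sm n i_top j_top Sm"
    unfolding Y_def by (simp add: Phi_Sm fun_eq_iff)
  have A2: "AE \<omega> in M. real_cond_exp M G (Phi W \<xi> \<psi> Sm n i_top j_top Sm) \<omega>
     = real_cond_exp M G (Phi W \<xi> \<psi> Sm n i_top j_top s) \<omega>"
    unfolding G_def by (rule chain[OF model _ _ _ \<psi>_meas \<psi>_bdd]) (use s_range in auto)
  have A3: "AE \<omega> in M. real_cond_exp M G (Phi W \<xi> \<psi> Sm n i_top j_top s) \<omega>
     = Phi W \<xi> \<psi> Sm n i_top j_top s \<omega>"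
    unfolding G_def
    by (rule real_cond_exp_F_meas[unfolded G_def, OF Phi_int[OF model _ \<psi>_meas \<psi>_bdd] Phi_meas[OF model _ \<psi>_meas]])
       (use s_range in auto)
  show ?thesis
    using A1 A2 A3 unfolding eqSm
  proof eventually_elim
    case (elim \<omega>)
    have "(\<Sum>i\<in>?R. \<Sum>j\<in>?R. real_cond_exp M G (Y i j) \<omega>) = Phi W \<xi> \<psi> Sm n i_top j_top s \<omega>"
      using elim by simp
    then show ?case unfolding Y_def G_def Phi_def .
  qed
qed

end
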